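(* Let $\zeta\in\overline{\mathbb D}$ and $f\in\mathcal D_\zeta$, $f(z)=\sum_{k=0}^\infty a_kz^k$. Then $\sum_{k=0}^\infty a_k\zeta^k$ converges, and, setting $$f_n(z):=\sum_{k=0}^{n-1}a_kz^k+\Bigl(\sum_{k=n}^\infty a_k\zeta^{k-n}\Bigr)z^n,$$ we have $\mathcal D_\zeta(f-f_n)\to0$ as $n\to\infty$.
   Context: $\mathbb D$ is the open unit disk, $\mathrm{Hol}(\mathbb D)$ the holomorphic functions on $\mathbb D$, and $H^2$ the Hardy space with $\|\sum b_kz^k\|_{H^2}^2=\sum|b_k|^2$. For $\zeta\in\overline{\mathbb D}$, $\mathcal D_\zeta$ is the set of $f\in\mathrm{Hol}(\mathbb D)$ of the form $f(z)=a+(z-\zeta)g(z)$ with $g\in H^2$, $a\in\mathbb C$; for such $f$ set $\mathcal D_\zeta(f):=\|g\|_{H^2}^2$, and set $\mathcal D_\zeta(f):=\infty$ if $f\notin\mathcal D_\zeta$. *)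

theory Defs
  imports "HOL-Complex_Analysis.Complex_Analysis"
begin

definition taylor_coeff :: "(complex \<Rightarrow> complex) \<Rightarrow> nat \<Rightarrow> complex" where
  "taylor_coeff g k = (deriv ^^ k) g 0 / of_nat (fact k)"

definition in_H2 :: "(complex \<Rightarrow> complex) \<Rightarrow> bool" where
  "in_H2 g \<longleftrightarrow> g holomorphic_on ball 0 1 \<and> summable (\<lambda>k. (norm (taylor_coeff g k))\<^sup>2)"

definition H2_normsq :: "(complex \<Rightarrow> complex) \<Rightarrow> real" where
  "H2_normsq g = (\<Sum>k. (norm (taylor_coeff g k))\<^sup>2)"

definition D_space :: "complex \<Rightarrow> (complex \<Rightarrow> complex) set" where
  "D_space \<zeta> = {f. f holomorphic_on ball 0 1 \<and>
      (\<exists>a g. in_H2 g \<and> (\<forall>z\<in>ball 0 1. f z = a + (z - \<zeta>) * g z))}"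

text \<open>Local Dirichlet integral D_zeta(f) = ||g||^2; infinity if f is not in D_zeta
  (the representation is unique, so the infimum is just ||g||^2; Inf of the empty set is infinity).\<close>
definition D_int :: "complex \<Rightarrow> (complex \<Rightarrow> complex) \<Rightarrow> ennreal" where
  "D_int \<zeta> f = (if f \<in> D_space \<zeta> then
      Inf {ennreal (H2_normsq g) | g. in_H2 g \<and>
            (\<exists>a. \<forall>z\<in>ball 0 1. f z = a + (z - \<zeta>) * g z)}
    else \<infinity>)"

end

theory Submission
  imports Defs
begin

lemma tc_fps: "f has_fps_expansion F \<Longrightarrow> taylor_coeff f k = fps_nth F k"
  by (simp add: taylor_coeff_def fps_nth_fps_expansion)

theorem corollary2p3:
  fixes \<zeta> :: complex and f :: "complex \<Rightarrow> complex"
  assumes "norm \<zeta> \<le> 1"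
    and "f \<in> D_space \<zeta>"
  shows "summable (\<lambda>k. taylor_coeff f k * \<zeta> ^ k) \<and>
         (\<lambda>n. D_int \<zeta> (\<lambda>z. f z -
            ((\<Sum>k<n. taylor_coeff f k * z ^ k)
             + (\<Sum>k. taylor_coeff f (k + n) * \<zeta> ^ k) * z ^ n)))
         \<longlonglongrightarrow> 0"
proof -
  from assms(2) obtain a g where fhol: "f holomorphic_on ball 0 1" and gH: "in_H2 g"
    and frep: "\<And>z. z\<in>ball 0 1 \<Longrightarrow> f z = a + (z - \<zeta>) * g z"
    unfolding D_space_def by blast
  from gH have ghol: "g holomorphic_on ball 0 1"
    and bsum: "summable (\<lambda>k. (norm (taylor_coeff g k))\<^sup>2)" by (auto simp: in_H2_def)
  define b where "b = taylor_coeff g"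
  define G where "G = fps_expansion g 0"
  have gexp: "g has_fps_expansion G" unfolding G_def
    by (rule has_fps_expansion_fps_expansion[OF _ _ ghol]) auto
  have Gb: "fps_nth G k = b k" for k using tc_fps[OF gexp] by (simp add: b_def)
  define F where "F = fps_const a + fps_X * G - fps_const \<zeta> * G"
  have ev: "eventually (\<lambda>z. z \<in> ball 0 1) (nhds (0::complex))"
    by (intro eventually_nhds_in_open) auto
  have fexp: "f has_fps_expansion F"
  proof -
    have "(\<lambda>z. a + z * g z - \<zeta> * g z) has_fps_expansion F"
      unfolding F_def by (intro fps_expansion_intros gexp)
    moreover have "eventually (\<lambda>z. a + z * g z - \<zeta> * g z = f z) (nhds 0)"
      using ev by eventually_elim (simp add: frep algebra_simps)
    ultimately show ?thesis using has_fps_expansion_cong[of "\<lambda>z. a + z * g z - \<zeta> * g z" f F F] by blast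
  qed
  define T where "T n = (if n = 0 then a else b (n - 1))" for n
  have acoef: "taylor_coeff f n = T n - \<zeta> * T (Suc n)" for n
    using tc_fps[OF fexp, of n] by (simp add: F_def Gb T_def fps_X_mult_nth)
  have b0: "b \<longlonglongrightarrow> 0"
  proof -
    have "(\<lambda>k. (norm (b k))\<^sup>2) \<longlonglongrightarrow> 0" using summable_LIMSEQ_zero[OF bsum] by (simp add: b_def)
    hence "(\<lambda>k. sqrt ((norm (b k))\<^sup>2)) \<longlonglongrightarrow> sqrt 0" by (intro tendsto_intros)
    hence "(\<lambda>k. norm (b k)) \<longlonglongrightarrow> 0" by simp
    thus ?thesis using tendsto_norm_zero_iff by blast
  qed
  have T0: "T \<longlonglongrightarrow> 0"
    by (rule LIMSEQ_imp_Suc) (simp add: T_def b0)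
  have tails: "(\<lambda>k. taylor_coeff f (k + n) * \<zeta> ^ k) sums T n" for n
  proof -
    have ps: "(\<Sum>k<M. taylor_coeff f (k + n) * \<zeta> ^ k) = T n - T (n + M) * \<zeta> ^ M" for M
    proof -
      have "(\<Sum>k<M. taylor_coeff f (k + n) * \<zeta> ^ k) =
            - (\<Sum>k<M. (\<lambda>j. T (n + j) * \<zeta> ^ j) (Suc k) - (\<lambda>j. T (n + j) * \<zeta> ^ j) k)"
        by (simp add: acoef sum_negf[symmetric] algebra_simps)
      also have "\<dots> = T n - T (n + M) * \<zeta> ^ M" by (subst sum_lessThan_telescope) simp
      finally show ?thesis .
    qed
    have "(\<lambda>M. T (n + M) * \<zeta> ^ M) \<longlonglongrightarrow> 0"
    proof (rule Lim_null_comparison)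
      show "\<forall>\<^sub>F M in sequentially. norm (T (n + M) * \<zeta> ^ M) \<le> norm (T (n + M))"
        using assms(1) by (intro always_eventually allI) (auto simp: norm_mult norm_power intro!: mult_left_le power_le_one)
      have "(\<lambda>M. T (M + n)) \<longlonglongrightarrow> 0" using T0 by (rule LIMSEQ_ignore_initial_segment)
      thus "(\<lambda>M. norm (T (n + M))) \<longlonglongrightarrow> 0" using tendsto_norm_zero by (simp add: add.commute)
    qed
    hence "(\<lambda>M. T n - T (n + M) * \<zeta> ^ M) \<longlonglongrightarrow> T n - 0" by (intro tendsto_intros)
    thus ?thesis unfolding sums_def ps by simp
  qed
  have part1: "summable (\<lambda>k. taylor_coeff f k * \<zeta> ^ k)"
    using tails[of 0] by (auto simp: sums_iff)
  define h where "h n z = g z - (\<Sum>k<n. b k * z ^ k)" for n z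
  define H where "H n = G - (\<Sum>k<n. fps_const (b k) * fps_X ^ k)" for n
  have hexp: "h n has_fps_expansion H n" for n
    unfolding h_def H_def by (intro fps_expansion_intros gexp)
  have hcoef: "taylor_coeff (h n) k = (if k < n then 0 else b k)" for n k
    using tc_fps[OF hexp, of n k] by (auto simp: H_def Gb fps_sum_nth fps_X_power_iff if_distrib cong: if_cong)
  have hH2: "in_H2 (h n)" for n
  proof -
    have "h n holomorphic_on ball 0 1" unfolding h_def by (intro holomorphic_intros ghol)
    moreover have "summable (\<lambda>k. (norm (taylor_coeff (h n) k))\<^sup>2)"
      by (rule summable_comparison_test'[OF bsum]) (auto simp: hcoef b_def)
    ultimately show ?thesis by (simp add: in_H2_def)
  qed
  have hnorm: "H2_normsq (h n) = (\<Sum>k. (norm (b (k + n)))\<^sup>2)" for n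
  proof -
    have s: "summable (\<lambda>k. (norm (taylor_coeff (h n) k))\<^sup>2)" using hH2 by (simp add: in_H2_def)
    have "H2_normsq (h n) = (\<Sum>k. (norm (taylor_coeff (h n) (k + n)))\<^sup>2) + (\<Sum>i<n. (norm (taylor_coeff (h n) i))\<^sup>2)"
      unfolding H2_normsq_def by (rule suminf_split_initial_segment[OF s])
    thus ?thesis by (simp add: hcoef)
  qed
  define fn where "fn n = (\<lambda>z. f z - ((\<Sum>k<n. taylor_coeff f k * z ^ k)
             + (\<Sum>k. taylor_coeff f (k + n) * \<zeta> ^ k) * z ^ n))" for n
  have poly_id: "a - (\<Sum>k<n. (T k - \<zeta> * T (Suc k)) * z ^ k) - T n * z ^ n
                 = - ((z - \<zeta>) * (\<Sum>k<n. b k * z ^ k))" for n z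
    by (induction n) (simp_all add: T_def algebra_simps)
  have fnrep: "fn n z = 0 + (z - \<zeta>) * h n z" if "z \<in> ball 0 1" for n z
  proof -
    have "fn n z = a + (z - \<zeta>) * g z - ((\<Sum>k<n. (T k - \<zeta> * T (Suc k)) * z ^ k) + T n * z ^ n)"
      unfolding fn_def using frep[OF that] sums_unique[OF tails[of n]] by (simp add: acoef)
    also have "\<dots> = (z - \<zeta>) * g z - (z - \<zeta>) * (\<Sum>k<n. b k * z ^ k)"
      using poly_id[where n=n and z=z] by (simp add: algebra_simps)
    finally show ?thesis by (simp add: h_def algebra_simps)
  qed
  have Dle: "D_int \<zeta> (fn n) \<le> ennreal (H2_normsq (h n))" for n
  proof -
    have "fn n holomorphic_on ball 0 1" unfolding fn_def by (intro holomorphic_intros fhol)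
    hence mem: "fn n \<in> D_space \<zeta>" unfolding D_space_def using hH2 fnrep by blast
    show ?thesis unfolding D_int_def using mem hH2 fnrep
      by (auto intro!: Inf_lower)
  qed
  have lim: "(\<lambda>n. ennreal (H2_normsq (h n))) \<longlonglongrightarrow> ennreal 0"
    unfolding hnorm by (intro tendsto_ennrealI suminf_exist_split2 summable_comparison_test'[OF bsum]) (simp add: b_def)
  have "(\<lambda>n. D_int \<zeta> (fn n)) \<longlonglongrightarrow> 0"
    by (rule tendsto_sandwich[OF _ _ tendsto_const lim[simplified]]) (auto intro!: always_eventually Dle)
  with part1 show ?thesis unfolding fn_def by simp
qed
end
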